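(* The function $f(x)=\sum_{n\geq 0}\frac{1}{(n+1)^2}\sum_{i=0}^{2^n-1}\sigma_{n,i}(x)$ on $[0,1]$ is completely non-Hölder.
   Context: The Faber–Schauder functions: $\sigma_{0,0}(x)=0$ for $x\le 0$ or $x\ge 1$, $\sigma_{0,0}(x)=2x$ for $0\le x\le \frac12$, $\sigma_{0,0}(x)=2-2x$ for $\frac12\le x\le 1$; and for $n\ge 0$, $0\le i\le 2^n-1$, $\sigma_{n,i}(x)=\sigma_{0,0}(2^nx-i)$. For $\alpha>0$, a function $g:[0,1]\to\mathbb{R}$ is called $\alpha$-Hölder at $x_0$ from the right if $\limsup_{y\searrow x_0}\frac{|g(y)-g(x_0)|}{|y-x_0|^\alpha}<\infty$, and $\alpha$-Hölder at $x_0$ from the left if $\limsup_{y\nearrow x_0}\frac{|g(y)-g(x_0)|}{|y-x_0|^\alpha}<\infty$. The function $g$ is called completely non-Hölder if there is no $x_0\in[0,1]$ and no $\alpha>0$ such that $g$ is $\alpha$-Hölder at $x_0$ from the left or from the right. *)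

theory Defs
  imports "HOL-Analysis.Analysis"
begin

definition sigma00 :: "real \<Rightarrow> real" where
  "sigma00 x = (if x \<le> 0 \<or> x \<ge> 1 then 0 else if x \<le> 1/2 then 2 * x else 2 - 2 * x)"

definition schauder :: "nat \<Rightarrow> nat \<Rightarrow> real \<Rightarrow> real" where
  "schauder n i x = sigma00 (2 ^ n * x - real i)"

definition fS :: "real \<Rightarrow> real" where
  "fS x = (\<Sum>n. (1 / (real n + 1)^2) * (\<Sum>i<2^n. schauder n i x))"

definition holder_right :: "(real \<Rightarrow> real) \<Rightarrow> real \<Rightarrow> real \<Rightarrow> bool" where
  "holder_right g alpha x0 \<longleftrightarrow> x0 \<in> {0..<1} \<and>
     Limsup (at x0 within {x0<..1}) (\<lambda>y. ereal (\<bar>g y - g x0\<bar> / \<bar>y - x0\<bar> powr alpha)) < \<infinity>"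

definition holder_left :: "(real \<Rightarrow> real) \<Rightarrow> real \<Rightarrow> real \<Rightarrow> bool" where
  "holder_left g alpha x0 \<longleftrightarrow> x0 \<in> {0<..1} \<and>
     Limsup (at x0 within {0..<x0}) (\<lambda>y. ereal (\<bar>g y - g x0\<bar> / \<bar>y - x0\<bar> powr alpha)) < \<infinity>"

definition completely_non_holder :: "(real \<Rightarrow> real) \<Rightarrow> bool" where
  "completely_non_holder g \<longleftrightarrow>
     \<not> (\<exists>x0\<in>{0..1}. \<exists>alpha>0. holder_left g alpha x0 \<or> holder_right g alpha x0)"

end

theory Submission imports Defs "HOL-Real_Asymp.Real_Asymp" begin

lemma sig_zero: "t \<le> 0 \<or> t \<ge> 1 \<Longrightarrow> sigma00 t = 0"
  by (auto simp: sigma00_def)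
lemma sig_lo: "0 \<le> t \<Longrightarrow> t \<le> 1/2 \<Longrightarrow> sigma00 t = 2*t"
  by (auto simp: sigma00_def)
lemma sig_hi: "1/2 \<le> t \<Longrightarrow> t \<le> 1 \<Longrightarrow> sigma00 t = 2 - 2*t"
  by (auto simp: sigma00_def)

lemma sig_int: "sigma00 (of_int z) = 0"
proof -
  have "z \<le> 0 \<or> z \<ge> 1" by linarith
  then show ?thesis by (intro sig_zero) auto
qed

lemma sig_half: "sigma00 (of_int z + 1/2) = (if z = 0 then 1 else 0)"
proof -
  have "z = 0 \<or> z \<le> -1 \<or> z \<ge> 1" by linarith
  then show ?thesis
  proof (elim disjE)
    assume "z \<le> -1" then have "real_of_int z \<le> -1" by simp
    then show ?thesis by (subst sig_zero) auto
  next
    assume "z \<ge> 1" then have "real_of_int z \<ge> 1" by simp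
    then show ?thesis by (subst sig_zero) auto
  qed (simp add: sig_lo)
qed

lemma sig_mid:
  fixes q :: int and e :: nat
  assumes e: "e \<ge> 1"
  shows "2 * sigma00 ((q + 1/2) / (2*e)) = sigma00 (q / (2*e)) + sigma00 ((q+1) / (2*e))"
proof -
  have E: "(0::real) < 2*e" using e by simp
  consider "q \<le> -1" | "0 \<le> q \<and> q \<le> int e - 1" | "int e \<le> q \<and> q \<le> 2 * int e - 1" | "q \<ge> 2 * int e"
    by linarith
  then show ?thesis
  proof cases
    case 1
    then have "real_of_int q \<le> -1" by simp
    then show ?thesis using E
      by (subst (1 2 3) sig_zero, auto simp: divide_le_0_iff)
  next
    case 2
    then have h: "0 \<le> real_of_int q" "real_of_int q + 1 \<le> real e" by simp_all
    have a: "real_of_int q / (2*e) \<le> 1/2" "(real_of_int q + 1/2) / (2*e) \<le> 1/2" "(real_of_int q + 1) / (2*e) \<le> 1/2"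
      using h E by (simp_all add: divide_simps)
    show ?thesis using h a
      by (subst (1 2 3) sig_lo, simp_all add: field_simps)
  next
    case 3
    then have h: "real e \<le> real_of_int q" "real_of_int q + 1 \<le> 2 * real e" by simp_all
    have a: "real_of_int q / (2*e) \<ge> 1/2" "(real_of_int q + 1/2) / (2*e) \<ge> 1/2" "(real_of_int q + 1) / (2*e) \<le> 1"
       "(real_of_int q + 1/2) / (2*e) \<le> 1" "(real_of_int q ) / (2*e) \<le> 1"  "(real_of_int q + 1) / (2*e) \<ge> 1/2"
      using h E by (simp_all add: divide_simps)
    show ?thesis using h a
      by (subst (1 2 3) sig_hi, simp_all add: field_simps)
  next
    case 4
    then have h: "2 * real e \<le> real_of_int q" by simp
    have a: "real_of_int q / (2*e) \<ge> 1" "(real_of_int q + 1/2) / (2*e) \<ge> 1" "(real_of_int q + 1) / (2*e) \<ge> 1"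
      using h E by (simp_all add: divide_simps)
    show ?thesis using a by (subst (1 2 3) sig_zero, auto)
  qed
qed

definition Sn :: "nat \<Rightarrow> real \<Rightarrow> real" where
  "Sn n x = (\<Sum>i<2^n. schauder n i x)"

lemma vanish:
  assumes "M \<le> n"
  shows "schauder n i (real k / 2^M) = 0"
proof -
  have "(2::real)^n = 2^(n-M) * 2^M" using assms by (simp add: power_add[symmetric])
  then have "(2::real)^n * (real k / 2^M) - real i = of_int (int k * 2^(n-M) - int i)"
    by simp
  then show ?thesis unfolding schauder_def by (simp only: sig_int)
qed

lemma fS_dyadic: "fS (real k / 2^M) = (\<Sum>n<M. (1 / (real n + 1)^2) * Sn n (real k / 2^M))"
  unfolding fS_def Sn_def
  by (rule suminf_finite) (auto simp: vanish)

lemma level_a: "schauder m i (real (2*j) / 2^(Suc m)) = 0"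
proof -
  have "(2::real)^m * (real (2*j) / 2^(Suc m)) - real i = of_int (int j - int i)" by simp
  then show ?thesis unfolding schauder_def by (simp only: sig_int)
qed

lemma level_b: "schauder m i (real (2*j+2) / 2^(Suc m)) = 0"
proof -
  have "(2::real)^m * (real (2*j+2) / 2^(Suc m)) - real i = of_int (int j + 1 - int i)" by simp
  then show ?thesis unfolding schauder_def by (simp only: sig_int)
qed

lemma level_mid: "schauder m i (real (2*j+1) / 2^(Suc m)) = (if i = j then 1 else 0)"
proof -
  have "(2::real)^m * (real (2*j+1) / 2^(Suc m)) - real i = of_int (int j - int i) + 1/2"
    by (simp add: field_simps)
  then show ?thesis unfolding schauder_def by (simp only: sig_half) auto
qed

lemma below:
  assumes "n < m"
  shows "2 * schauder n i (real (2*j+1) / 2^(Suc m)) =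
    schauder n i (real (2*j) / 2^(Suc m)) + schauder n i (real (2*j+2) / 2^(Suc m))"
proof -
  define e :: nat where "e = 2^(m - n - 1)"
  have e1: "e \<ge> 1" by (simp add: e_def)
  define q :: int where "q = int j - int i * 2 * int e"
  have pw: "(2::real)^(Suc m) = 2^n * (2 * (2 * real e))"
    using assms by (simp add: e_def power_add[symmetric] power_Suc[symmetric] del: power_Suc)
  have "(2::real)^n * (real (2*j) / 2^(Suc m)) - real i = real_of_int q / (2 * real e)"
    using e1 unfolding pw q_def by (simp add: field_simps)
  moreover have "(2::real)^n * (real (2*j+1) / 2^(Suc m)) - real i = (real_of_int q + 1/2) / (2 * real e)"
    using e1 unfolding pw q_def by (simp add: field_simps)
  moreover have "(2::real)^n * (real (2*j+2) / 2^(Suc m)) - real i = (real_of_int q + 1) / (2 * real e)"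
    using e1 unfolding pw q_def by (simp add: field_simps)
  ultimately show ?thesis unfolding schauder_def using sig_mid[OF e1, of q] by simp
qed

lemma second_diff:
  assumes "j + 1 \<le> (2::nat)^m"
  shows "fS (real (2*j+1) / 2^Suc m) - (fS (real (2*j) / 2^Suc m) + fS (real (2*j+2) / 2^Suc m)) / 2
     = 1 / (real m + 1)^2"
proof -
  let ?a = "real (2*j) / 2^Suc m" and ?c = "real (2*j+1) / 2^Suc m" and ?b = "real (2*j+2) / 2^Suc m"
  define c :: "nat \<Rightarrow> real" where "c n = 1 / (real n + 1)^2" for n :: nat
  have "fS ?c - (fS ?a + fS ?b) / 2 = (\<Sum>n<Suc m. c n * (Sn n ?c - (Sn n ?a + Sn n ?b) / 2))"
  proof -
    have g: "(\<Sum>n\<in>N. c n * Z n) - ((\<Sum>n\<in>N. c n * X n) + (\<Sum>n\<in>N. c n * Y n)) / 2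
       = (\<Sum>n\<in>N. c n * (Z n - (X n + Y n) / 2))" for N :: "nat set" and X Y Z :: "nat \<Rightarrow> real"
    proof -
      have "(\<Sum>n\<in>N. c n * (Z n - (X n + Y n) / 2)) = (\<Sum>n\<in>N. c n * Z n - (c n * X n + c n * Y n) / 2)"
        by (rule sum.cong) (auto simp: algebra_simps)
      also have "\<dots> = (\<Sum>n\<in>N. c n * Z n) - ((\<Sum>n\<in>N. c n * X n) + (\<Sum>n\<in>N. c n * Y n)) / 2"
        by (simp only: sum_subtractf sum_divide_distrib[symmetric] sum.distrib)
      finally show ?thesis by simp
    qed
    show ?thesis unfolding fS_dyadic c_def[symmetric] by (rule g)
  qed
  also have "\<dots> = c m * (Sn m ?c - (Sn m ?a + Sn m ?b) / 2)"
  proof -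
    have "Sn n ?c - (Sn n ?a + Sn n ?b) / 2 = 0" if "n < m" for n
    proof -
      have "2 * Sn n ?c = Sn n ?a + Sn n ?b"
        unfolding Sn_def sum_distrib_left sum.distrib[symmetric]
        using below[OF that] by (intro sum.cong) auto
      then show ?thesis by simp
    qed
    then have "(\<Sum>n<m. c n * (Sn n ?c - (Sn n ?a + Sn n ?b) / 2)) = 0"
      by (intro sum.neutral) (metis lessThan_iff mult_zero_right)
    then show ?thesis by (simp only: sum.lessThan_Suc add_0)
  qed
  also have "Sn m ?a = 0" unfolding Sn_def by (simp only: level_a sum.neutral_const)
  also have "Sn m ?b = 0" unfolding Sn_def by (simp only: level_b sum.neutral_const)
  also have "Sn m ?c = 1" unfolding Sn_def using assms by (simp only: level_mid) simp
  finally show ?thesis by (simp add: c_def)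
qed

lemma pick3:
  fixes fa fb fc f0 c :: real
  assumes "fc - (fa + fb) / 2 = c"
  shows "\<bar>fa - f0\<bar> \<ge> c/2 \<or> \<bar>fc - f0\<bar> \<ge> c/2 \<or> \<bar>fb - f0\<bar> \<ge> c/2"
proof (rule ccontr)
  assume "\<not> ?thesis"
  then have "\<bar>fa - f0\<bar> < c/2" "\<bar>fc - f0\<bar> < c/2" "\<bar>fb - f0\<bar> < c/2" by auto
  then have "fc - f0 < c/2" "f0 - fa < c/2" "f0 - fb < c/2"
    by (metis abs_ge_self le_less_trans, metis abs_ge_minus_self minus_diff_eq le_less_trans,
        metis abs_ge_minus_self minus_diff_eq le_less_trans)
  moreover have "fc - f0 - ((fa - f0) + (fb - f0)) / 2 = c" using assms by (simp add: field_simps)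
  ultimately show False by argo
qed

lemma h_up: "0 < D \<Longrightarrow> t - x0*D \<le> K \<Longrightarrow> t/D - x0 \<le> K/(D::real)"
proof -
  assume D: "0 < D" and h: "t - x0*D \<le> K"
  have "t/D - x0 = (t - x0*D)/D" using D by (simp add: field_simps)
  also have "\<dots> \<le> K/D" using D h by (intro divide_right_mono) auto
  finally show ?thesis .
qed
lemma h_down: "0 < D \<Longrightarrow> x0*D - t \<le> K \<Longrightarrow> x0 - t/D \<le> K/(D::real)"
proof -
  assume D: "0 < D" and h: "x0*D - t \<le> K"
  have "x0 - t/D = (x0*D - t)/D" using D by (simp add: field_simps)
  also have "\<dots> \<le> K/D" using D h by (intro divide_right_mono) auto
  finally show ?thesis .
qed
lemma h_ge: "0 < D \<Longrightarrow> x0*D \<le> t \<Longrightarrow> x0 \<le> t/(D::real)" by (simp add: pos_le_divide_eq)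
lemma h_gt: "0 < D \<Longrightarrow> x0*D < t \<Longrightarrow> x0 < t/(D::real)" by (simp add: pos_less_divide_eq)
lemma h_le: "0 < D \<Longrightarrow> t \<le> x0*D \<Longrightarrow> t/D \<le> (x0::real)" by (simp add: pos_divide_le_eq)
lemma h_lt: "0 < D \<Longrightarrow> t < x0*D \<Longrightarrow> t/D < (x0::real)" by (simp add: pos_divide_less_eq)
lemma h_nn: "0 < D \<Longrightarrow> 0 \<le> t \<Longrightarrow> 0 \<le> t/(D::real)" by simp

lemma right_point:
  assumes x0: "0 \<le> x0" and m: "2 / 2^m \<le> 1 - x0"
  shows "\<exists>y. x0 < y \<and> y \<le> 1 \<and> y - x0 \<le> 2 / 2^m \<and> \<bar>fS y - fS x0\<bar> \<ge> 1 / (2 * (real m + 1)^2)"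
proof -
  define j where "j = nat \<lceil>x0 * 2^m\<rceil>"
  have P: "(0::real) < 2^m" by simp
  have j1: "real j \<ge> x0 * 2^m" "real j < x0 * 2^m + 1"
    using x0 unfolding j_def by (auto intro: le_of_int_ceiling) linarith
  have "x0 * 2^m + 2 \<le> 2^m" using m P by (simp add: field_simps)
  with j1 have "real (j+1) \<le> 2^m" by simp
  then have jm: "j + 1 \<le> 2^m"
    by (metis of_nat_le_iff of_nat_numeral of_nat_power)
  define c where "c = 1 / (real m + 1)^2"
  have cpos: "c > 0" unfolding c_def by simp
  let ?a = "real (2*j) / 2^Suc m" and ?c = "real (2*j+1) / 2^Suc m" and ?b = "real (2*j+2) / 2^Suc m"
  have a: "?a = real j / 2^m" and cc: "?c = (real j + 1/2) / 2^m" and b: "?b = (real j + 1) / 2^m"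
    by (simp_all add: field_simps)
  have jj: "real j + 1 \<le> 2^m" using \<open>real (j+1) \<le> 2^m\<close> by simp
  have ax: "x0 \<le> ?a" unfolding a using j1 P by (intro h_ge) auto
  have cx0: "x0 < ?c" unfolding cc by (rule h_gt[OF P]) (insert j1 jj of_nat_0_le_iff[of j], linarith)
  have cx1: "?c \<le> 1" unfolding cc by (rule h_le[OF P]) (insert j1 jj of_nat_0_le_iff[of j], linarith)
  have cx2: "?c - x0 \<le> 2/2^m" unfolding cc by (rule h_up[OF P]) (insert j1 jj of_nat_0_le_iff[of j], linarith)
  note cx = cx0 cx1 cx2
  have bx0: "x0 < ?b" unfolding b by (rule h_gt[OF P]) (insert j1 jj of_nat_0_le_iff[of j], linarith)
  have bx1: "?b \<le> 1" unfolding b by (rule h_le[OF P]) (insert j1 jj of_nat_0_le_iff[of j], linarith)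
  have bx2: "?b - x0 \<le> 2/2^m" unfolding b by (rule h_up[OF P]) (insert j1 jj of_nat_0_le_iff[of j], linarith)
  note bx = bx0 bx1 bx2
  have ax20: "?a \<le> 1" unfolding a by (rule h_le[OF P]) (insert j1 jj of_nat_0_le_iff[of j], linarith)
  have ax21: "?a - x0 \<le> 2/2^m" unfolding a by (rule h_up[OF P]) (insert j1 jj of_nat_0_le_iff[of j], linarith)
  note ax2 = ax20 ax21
  have sd: "fS ?c - (fS ?a + fS ?b) / 2 = c" using second_diff[OF jm] unfolding c_def .
  have cc2: "c / 2 = 1 / (2 * (real m + 1)^2)" unfolding c_def by simp
  from pick3[OF sd, of "fS x0"] show ?thesis
  proof (elim disjE)
    assume h: "\<bar>fS ?a - fS x0\<bar> \<ge> c/2"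
    with cpos have "?a \<noteq> x0" by auto
    with ax have "x0 < ?a" by simp
    with h ax2 cc2 show ?thesis by metis
  next
    assume h: "\<bar>fS ?c - fS x0\<bar> \<ge> c/2"
    with cx cc2 show ?thesis by metis
  next
    assume h: "\<bar>fS ?b - fS x0\<bar> \<ge> c/2"
    with bx cc2 show ?thesis by metis
  qed
qed

lemma left_point:
  assumes x0: "x0 \<le> 1" and m: "2 / 2^m \<le> x0"
  shows "\<exists>y. y < x0 \<and> 0 \<le> y \<and> x0 - y \<le> 2 / 2^m \<and> \<bar>fS y - fS x0\<bar> \<ge> 1 / (2 * (real m + 1)^2)"
proof -
  have P: "(0::real) < 2^m" by simp
  have "2 \<le> x0 * 2^m" using m P by (simp add: field_simps)
  then have fl: "2 \<le> \<lfloor>x0 * 2^m\<rfloor>" by linarith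
  define j where "j = nat (\<lfloor>x0 * 2^m\<rfloor> - 1)"
  have rj: "real j = real_of_int \<lfloor>x0 * 2^m\<rfloor> - 1" using fl unfolding j_def by simp
  have j1: "real j + 1 \<le> x0 * 2^m" "real j + 2 > x0 * 2^m"
    unfolding rj by linarith+
  have X: "x0 * 2^m \<le> 1 * 2^m" using x0 P by (intro mult_right_mono) auto
  have "real j + 1 \<le> 2^m" using j1(1) X by linarith
  then have "real (j+1) \<le> 2^m" by simp
  then have jm: "j + 1 \<le> 2^m"
    by (metis of_nat_le_iff of_nat_numeral of_nat_power)
  define c where "c = 1 / (real m + 1)^2"
  have cpos: "c > 0" unfolding c_def by simp
  let ?a = "real (2*j) / 2^Suc m" and ?c = "real (2*j+1) / 2^Suc m" and ?b = "real (2*j+2) / 2^Suc m"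
  have a: "?a = real j / 2^m" and cc: "?c = (real j + 1/2) / 2^m" and b: "?b = (real j + 1) / 2^m"
    by (simp_all add: field_simps)
  have bx0: "?b \<le> x0" unfolding b by (rule h_le[OF P]) (insert j1 of_nat_0_le_iff[of j], linarith)
  have bx1: "0 \<le> ?b" unfolding b by (rule h_nn[OF P]) (insert j1 of_nat_0_le_iff[of j], linarith)
  have bx2: "x0 - ?b \<le> 2/2^m" unfolding b by (rule h_down[OF P]) (insert j1 of_nat_0_le_iff[of j], linarith)
  note bx = bx0 bx1 bx2
  have cx0: "?c < x0" unfolding cc by (rule h_lt[OF P]) (insert j1 of_nat_0_le_iff[of j], linarith)
  have cx1: "0 \<le> ?c" unfolding cc by (rule h_nn[OF P]) (insert j1 of_nat_0_le_iff[of j], linarith)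
  have cx2: "x0 - ?c \<le> 2/2^m" unfolding cc by (rule h_down[OF P]) (insert j1 of_nat_0_le_iff[of j], linarith)
  note cx = cx0 cx1 cx2
  have ax0: "?a < x0" unfolding a by (rule h_lt[OF P]) (insert j1 of_nat_0_le_iff[of j], linarith)
  have ax1: "0 \<le> ?a" unfolding a by (rule h_nn[OF P]) (insert j1 of_nat_0_le_iff[of j], linarith)
  have ax2: "x0 - ?a \<le> 2/2^m" unfolding a by (rule h_down[OF P]) (insert j1 of_nat_0_le_iff[of j], linarith)
  note ax = ax0 ax1 ax2
  have sd: "fS ?c - (fS ?a + fS ?b) / 2 = c" using second_diff[OF jm] unfolding c_def .
  have cc2: "c / 2 = 1 / (2 * (real m + 1)^2)" unfolding c_def by simp
  from pick3[OF sd, of "fS x0"] show ?thesis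
  proof (elim disjE)
    assume h: "\<bar>fS ?b - fS x0\<bar> \<ge> c/2"
    with cpos have "?b \<noteq> x0" by auto
    with bx have "?b < x0" by simp
    with h bx cc2 show ?thesis by metis
  next
    assume h: "\<bar>fS ?c - fS x0\<bar> \<ge> c/2"
    with cx cc2 show ?thesis by metis
  next
    assume h: "\<bar>fS ?a - fS x0\<bar> \<ge> c/2"
    with ax cc2 show ?thesis by metis
  qed
qed

lemma no_holder:
  fixes S :: "real set"
  assumes al: "\<alpha> > 0"
    and L: "Limsup (at x0 within S) (\<lambda>y. ereal (\<bar>fS y - fS x0\<bar> / \<bar>y - x0\<bar> powr \<alpha>)) < \<infinity>"
    and pts: "\<forall>\<^sub>F m in sequentially. \<exists>y\<in>S. y \<noteq> x0 \<and> \<bar>y - x0\<bar> \<le> 2/2^m \<and>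
                \<bar>fS y - fS x0\<bar> \<ge> 1 / (2 * (real m + 1)^2)"
  shows False
proof -
  from L obtain n :: nat where n: "Limsup (at x0 within S) (\<lambda>y. ereal (\<bar>fS y - fS x0\<bar> / \<bar>y - x0\<bar> powr \<alpha>)) < ereal (real n)"
    using less_PInf_Ex_of_nat by auto
  from Limsup_lessD[OF n] obtain \<delta> where d: "\<delta> > 0"
    and dB: "\<And>y. y \<in> S \<Longrightarrow> y \<noteq> x0 \<Longrightarrow> dist y x0 < \<delta> \<Longrightarrow> \<bar>fS y - fS x0\<bar> / \<bar>y - x0\<bar> powr \<alpha> < real n"
    unfolding eventually_at by auto
  have lim1: "filterlim (\<lambda>m::nat. (1/(2*(real m+1)^2)) / (2/2^m) powr \<alpha>) at_top sequentially"
    using al by real_asymp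
  have lim2: "((\<lambda>m::nat. 2/(2::real)^m) \<longlongrightarrow> 0) sequentially"
    by real_asymp
  have "\<forall>\<^sub>F m in sequentially. real n \<le> (1/(2*(real m+1)^2)) / (2/2^m) powr \<alpha>"
    using lim1 unfolding filterlim_at_top by blast
  moreover have "\<forall>\<^sub>F m in sequentially. 2/(2::real)^m < \<delta>"
    using order_tendstoD(2)[OF lim2 d] .
  ultimately have "\<forall>\<^sub>F m in sequentially. real n \<le> (1/(2*(real m+1)^2)) / (2/2^m) powr \<alpha> \<and> 2/(2::real)^m < \<delta> \<and>
     (\<exists>y\<in>S. y \<noteq> x0 \<and> \<bar>y - x0\<bar> \<le> 2/2^m \<and> \<bar>fS y - fS x0\<bar> \<ge> 1 / (2 * (real m + 1)^2))"
    using pts by eventually_elim blast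
  then obtain N where "\<forall>m\<ge>N. real n \<le> (1/(2*(real m+1)^2)) / (2/2^m) powr \<alpha> \<and> 2/(2::real)^m < \<delta> \<and>
     (\<exists>y\<in>S. y \<noteq> x0 \<and> \<bar>y - x0\<bar> \<le> 2/2^m \<and> \<bar>fS y - fS x0\<bar> \<ge> 1 / (2 * (real m + 1)^2))"
    unfolding eventually_sequentially by blast
  then have "real n \<le> (1/(2*(real N+1)^2)) / (2/2^N) powr \<alpha> \<and> 2/(2::real)^N < \<delta> \<and>
     (\<exists>y\<in>S. y \<noteq> x0 \<and> \<bar>y - x0\<bar> \<le> 2/2^N \<and> \<bar>fS y - fS x0\<bar> \<ge> 1 / (2 * (real N + 1)^2))"
    by blast
  then obtain m y where m1: "real n \<le> (1/(2*(real m+1)^2)) / (2/2^m) powr \<alpha>" and m2: "2/(2::real)^m < \<delta>"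
    and y: "y \<in> S" "y \<noteq> x0" "\<bar>y - x0\<bar> \<le> 2/2^m" "\<bar>fS y - fS x0\<bar> \<ge> 1 / (2 * (real m + 1)^2)"
    by blast
  have "dist y x0 < \<delta>" using y m2 by (simp add: dist_real_def)
  then have lt: "\<bar>fS y - fS x0\<bar> / \<bar>y - x0\<bar> powr \<alpha> < real n" using dB y by auto
  have pos: "0 < \<bar>y - x0\<bar> powr \<alpha>" using y by simp
  have "\<bar>y - x0\<bar> powr \<alpha> \<le> (2/2^m) powr \<alpha>" using y al by (intro powr_mono2) auto
  then have "(1/(2*(real m+1)^2)) / (2/2^m) powr \<alpha> \<le> \<bar>fS y - fS x0\<bar> / \<bar>y - x0\<bar> powr \<alpha>"
    using y pos by (intro frac_le) auto
  with m1 lt show False by linarith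
qed

theorem mainTheorem4:
  shows "completely_non_holder fS"
  unfolding completely_non_holder_def
proof (rule notI, elim bexE exE conjE disjE)
  have lim2: "((\<lambda>m::nat. 2/(2::real)^m) \<longlongrightarrow> 0) sequentially"
    by real_asymp
  fix x0 :: real and \<alpha> :: real
  assume al: "\<alpha> > 0"
  {
    assume "holder_left fS \<alpha> x0"
    then have x: "0 < x0" "x0 \<le> 1" and L: "Limsup (at x0 within {0..<x0}) (\<lambda>y. ereal (\<bar>fS y - fS x0\<bar> / \<bar>y - x0\<bar> powr \<alpha>)) < \<infinity>"
      unfolding holder_left_def by auto
    have "\<forall>\<^sub>F m in sequentially. 2/(2::real)^m < x0" using order_tendstoD(2)[OF lim2 x(1)] .
    then have "\<forall>\<^sub>F m in sequentially. \<exists>y\<in>{0..<x0}. y \<noteq> x0 \<and> \<bar>y - x0\<bar> \<le> 2/2^m \<and>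
                \<bar>fS y - fS x0\<bar> \<ge> 1 / (2 * (real m + 1)^2)"
    proof eventually_elim
      case (elim m)
      then obtain y where "y < x0 \<and> 0 \<le> y \<and> x0 - y \<le> 2 / 2^m \<and> \<bar>fS y - fS x0\<bar> \<ge> 1 / (2 * (real m + 1)^2)"
        using left_point[OF x(2), of m] by auto
      then show ?case by (intro bexI[of _ y]) auto
    qed
    from no_holder[OF al L this] show False .
  }
  {
    assume "holder_right fS \<alpha> x0"
    then have x: "0 \<le> x0" "x0 < 1" and L: "Limsup (at x0 within {x0<..1}) (\<lambda>y. ereal (\<bar>fS y - fS x0\<bar> / \<bar>y - x0\<bar> powr \<alpha>)) < \<infinity>"
      unfolding holder_right_def by auto
    have "0 < 1 - x0" using x by simp
    have "\<forall>\<^sub>F m in sequentially. 2/(2::real)^m < 1 - x0" using order_tendstoD(2)[OF lim2 \<open>0 < 1 - x0\<close>] .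
    then have "\<forall>\<^sub>F m in sequentially. \<exists>y\<in>{x0<..1}. y \<noteq> x0 \<and> \<bar>y - x0\<bar> \<le> 2/2^m \<and>
                \<bar>fS y - fS x0\<bar> \<ge> 1 / (2 * (real m + 1)^2)"
    proof eventually_elim
      case (elim m)
      then obtain y where "x0 < y \<and> y \<le> 1 \<and> y - x0 \<le> 2 / 2^m \<and> \<bar>fS y - fS x0\<bar> \<ge> 1 / (2 * (real m + 1)^2)"
        using right_point[OF x(1), of m] by auto
      then show ?case by (intro bexI[of _ y]) auto
    qed
    from no_holder[OF al L this] show False .
  }
qed

end
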